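(* Let $X$ be a Banach space and $\{L(t,\tau):t\geqslant\tau\}\subset\mathcal L(X)$ a linear evolution process having exponential splitting with constant $M\geqslant1$, exponents $\gamma>\rho$ and projections $\{Q(t):t\in\mathbb R\}$, and also having exponential splitting with constant $M_*\geqslant1$, exponents $\gamma_*>\rho_*$ with $\gamma>\gamma_*$, and projections $\{Q_*(t):t\in\mathbb R\}$. Then $\mathrm{Im}(Q_*(t))\subset\mathrm{Im}(Q(t))$ and $\mathrm{Ker}(Q(t))\subset\mathrm{Ker}(Q_*(t))$ for all $t\in\mathbb R$.
   Context: A linear evolution process is a family $\{L(t,\tau):t\geqslant\tau\}\subset\mathcal L(X)$ with $L(t,t)=I$, $L(t,s)L(s,\tau)=L(t,\tau)$ for $t\geqslant s\geqslant\tau$ and $t\mapsto L(t,\tau)u$ continuous. It has exponential splitting with constant $M\geqslant1$, exponents $\gamma>\rho$ and projections $\{Q(t)\}\subset\mathcal L(X)$ if $Q(t)L(t,\tau)=L(t,\tau)Q(\tau)$ for $t\geqslant\tau$, $L(t,\tau):\mathrm{Im}Q(\tau)\to\mathrm{Im}Q(t)$ is an isomorphism (inverse denoted $L(\tau,t)$), $\|L(t,\tau)Q(\tau)\|\leqslant Me^{-\rho(t-\tau)}$ for $t\leqslant\tau$ and $\|L(t,\tau)(I-Q(\tau))\|\leqslant Me^{-\gamma(t-\tau)}$ for $t\geqslant\tau$. *)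

theory Defs
  imports "HOL-Analysis.Analysis"
begin

text \<open>A linear evolution process on a normed space: a family of bounded linear
  operators L t tau (meaningful for t \<ge> tau).\<close>
definition evolution_process :: "(real \<Rightarrow> real \<Rightarrow> ('a::real_normed_vector \<Rightarrow>\<^sub>L 'a)) \<Rightarrow> bool" where
  "evolution_process L \<longleftrightarrow>
     (\<forall>t. L t t = id_blinfun) \<and>
     (\<forall>t s \<tau>. \<tau> \<le> s \<and> s \<le> t \<longrightarrow> L t s o\<^sub>L L s \<tau> = L t \<tau>) \<and>
     (\<forall>\<tau> u. continuous_on {\<tau>..} (\<lambda>t. L t \<tau> u))"

text \<open>For t \<ge> tau, back_op L Q tau t is the inverse L(tau,t) of the restriction
  of L t tau to Im Q(tau), mapping Im Q(t) back to Im Q(tau).\<close>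
definition back_op :: "(real \<Rightarrow> real \<Rightarrow> ('a::real_normed_vector \<Rightarrow>\<^sub>L 'a)) \<Rightarrow> (real \<Rightarrow> ('a \<Rightarrow>\<^sub>L 'a))
    \<Rightarrow> real \<Rightarrow> real \<Rightarrow> 'a \<Rightarrow> 'a" where
  "back_op L Q \<tau> t = the_inv_into (range (blinfun_apply (Q \<tau>))) (blinfun_apply (L t \<tau>))"

definition exponential_splitting ::
  "(real \<Rightarrow> real \<Rightarrow> ('a::real_normed_vector \<Rightarrow>\<^sub>L 'a)) \<Rightarrow> real \<Rightarrow> real \<Rightarrow> real \<Rightarrow> (real \<Rightarrow> ('a \<Rightarrow>\<^sub>L 'a)) \<Rightarrow> bool" where
  "exponential_splitting L M \<gamma> \<rho> Q \<longleftrightarrow>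
     M \<ge> 1 \<and> \<gamma> > \<rho> \<and>
     (\<forall>t. Q t o\<^sub>L Q t = Q t) \<and>
     (\<forall>t \<tau>. \<tau> \<le> t \<longrightarrow> Q t o\<^sub>L L t \<tau> = L t \<tau> o\<^sub>L Q \<tau>) \<and>
     (\<forall>t \<tau>. \<tau> \<le> t \<longrightarrow> bij_betw (blinfun_apply (L t \<tau>)) (range (blinfun_apply (Q \<tau>))) (range (blinfun_apply (Q t)))) \<and>
     (\<forall>t \<tau> x. t \<le> \<tau> \<longrightarrow> norm (back_op L Q t \<tau> (Q \<tau> x)) \<le> M * exp (-\<rho> * (t - \<tau>)) * norm x) \<and>
     (\<forall>t \<tau>. \<tau> \<le> t \<longrightarrow> norm (L t \<tau> o\<^sub>L (id_blinfun - Q \<tau>)) \<le> M * exp (-\<gamma> * (t - \<tau>)))"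

end

theory Submission
  imports Defs "HOL-Real_Asymp.Real_Asymp"
begin

lemma decay_zero:
  fixes a K c :: real
  assumes c: "c > 0" and b: "\<And>d. d \<ge> 0 \<Longrightarrow> a \<le> K * exp (-c * d)"
  shows "a \<le> 0"
proof -
  have lim: "((\<lambda>d. K * exp (-c * d)) \<longlongrightarrow> 0) at_top" using c by real_asymp
  have ev: "eventually (\<lambda>d. a \<le> K * exp (-c * d)) at_top"
    by (rule eventually_mono[OF eventually_ge_at_top[of "0::real"]]) (rule b)
  show ?thesis
    by (rule tendsto_le[OF trivial_limit_at_top_linorder lim tendsto_const ev])
qed

lemma img_iff:
  assumes "Q o\<^sub>L Q = Q"
  shows "y \<in> range (blinfun_apply Q) \<longleftrightarrow> Q y = y"
proof
  assume "y \<in> range (blinfun_apply Q)"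
  then obtain x where "y = Q x" by auto
  then show "Q y = y" using assms by (metis blinfun_apply_blinfun_compose)
qed (metis rangeI)

lemma ker_part:
  fixes L :: "real \<Rightarrow> real \<Rightarrow> ('a::banach \<Rightarrow>\<^sub>L 'a)"
    and Q Q\<^sub>s :: "real \<Rightarrow> ('a \<Rightarrow>\<^sub>L 'a)"
  assumes A: "exponential_splitting L M \<gamma> \<rho> Q"
    and B: "exponential_splitting L M\<^sub>s \<gamma>\<^sub>s \<rho>\<^sub>s Q\<^sub>s"
    and g: "\<gamma> > \<gamma>\<^sub>s"
    and x: "Q t x = 0"
  shows "Q\<^sub>s t x = 0"
proof -
  note AA = A[unfolded exponential_splitting_def]
  note BB = B[unfolded exponential_splitting_def]
  define y where "y = Q\<^sub>s t x"
  have "norm y \<le> M\<^sub>s * (M + M\<^sub>s) * norm x * exp (-(\<gamma>\<^sub>s - \<rho>\<^sub>s) * d)" if d: "d \<ge> 0" for d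
  proof -
    define s where "s = t + d"
    have st: "t \<le> s" using d s_def by simp
    have n1: "norm (L s t x) \<le> M * exp (-\<gamma> * d) * norm x"
    proof -
      have "L s t x = (L s t o\<^sub>L (id_blinfun - Q t)) x" using x by (simp add: blinfun.diff_left blinfun.diff_right)
      also have "norm \<dots> \<le> norm (L s t o\<^sub>L (id_blinfun - Q t)) * norm x" by (rule norm_blinfun)
      also have "\<dots> \<le> M * exp (-\<gamma> * (s - t)) * norm x"
        using AA st by (intro mult_right_mono) auto
      finally show ?thesis by (simp add: s_def)
    qed
    have n2: "norm ((L s t o\<^sub>L (id_blinfun - Q\<^sub>s t)) x) \<le> M\<^sub>s * exp (-\<gamma>\<^sub>s * d) * norm x"
    proof -
      have "norm ((L s t o\<^sub>L (id_blinfun - Q\<^sub>s t)) x) \<le> norm (L s t o\<^sub>L (id_blinfun - Q\<^sub>s t)) * norm x" by (rule norm_blinfun)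
      also have "\<dots> \<le> M\<^sub>s * exp (-\<gamma>\<^sub>s * (s - t)) * norm x"
        using BB st by (intro mult_right_mono) auto
      finally show ?thesis by (simp add: s_def)
    qed
    have eq: "L s t y = L s t x - (L s t o\<^sub>L (id_blinfun - Q\<^sub>s t)) x"
      by (simp add: y_def blinfun.diff_left blinfun.diff_right)
    have e1: "exp (-\<gamma> * d) \<le> exp (-\<gamma>\<^sub>s * d)" using g d by (simp add: mult_right_mono)
    have n3: "norm (L s t y) \<le> (M + M\<^sub>s) * exp (-\<gamma>\<^sub>s * d) * norm x"
    proof -
      have "norm (L s t y) \<le> M * exp (-\<gamma> * d) * norm x + M\<^sub>s * exp (-\<gamma>\<^sub>s * d) * norm x"
        using eq n1 n2 norm_triangle_ineq4 by (smt (verit))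
      also have "\<dots> \<le> M * exp (-\<gamma>\<^sub>s * d) * norm x + M\<^sub>s * exp (-\<gamma>\<^sub>s * d) * norm x"
        using AA e1 by (intro add_right_mono mult_right_mono mult_left_mono) auto
      finally show ?thesis by (simp add: algebra_simps)
    qed
    have yr: "y \<in> range (blinfun_apply (Q\<^sub>s t))" by (simp add: y_def)
    have bij: "bij_betw (blinfun_apply (L s t)) (range (blinfun_apply (Q\<^sub>s t))) (range (blinfun_apply (Q\<^sub>s s)))"
      using BB st by auto
    have comm: "Q\<^sub>s s (L s t y) = L s t y"
    proof -
      have "Q\<^sub>s s (L s t y) = (Q\<^sub>s s o\<^sub>L L s t) y" by simp
      also have "\<dots> = (L s t o\<^sub>L Q\<^sub>s t) y" using BB st by metis
      also have "\<dots> = L s t y" using yr img_iff[of "Q\<^sub>s t"] BB by simp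
      finally show ?thesis .
    qed
    have "back_op L Q\<^sub>s t s (Q\<^sub>s s (L s t y)) = y"
      unfolding comm back_op_def using bij yr by (simp add: bij_betw_def the_inv_into_f_f)
    then have "norm y \<le> M\<^sub>s * exp (-\<rho>\<^sub>s * (t - s)) * norm (L s t y)"
      using BB st by metis
    also have "\<dots> = M\<^sub>s * exp (\<rho>\<^sub>s * d) * norm (L s t y)" by (simp add: s_def)
    also have "\<dots> \<le> M\<^sub>s * exp (\<rho>\<^sub>s * d) * ((M + M\<^sub>s) * exp (-\<gamma>\<^sub>s * d) * norm x)"
      using n3 BB by (intro mult_left_mono) auto
    also have "\<dots> = M\<^sub>s * (M + M\<^sub>s) * norm x * (exp (\<rho>\<^sub>s * d) * exp (-\<gamma>\<^sub>s * d))" by simp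
    also have "exp (\<rho>\<^sub>s * d) * exp (-\<gamma>\<^sub>s * d) = exp (-(\<gamma>\<^sub>s - \<rho>\<^sub>s) * d)"
      by (simp add: exp_add[symmetric] algebra_simps)
    finally show ?thesis .
  qed
  then have "norm y \<le> 0" using BB by (intro decay_zero[of "\<gamma>\<^sub>s - \<rho>\<^sub>s"]) auto
  then show ?thesis by (simp add: y_def)
qed

lemma img_part:
  fixes L :: "real \<Rightarrow> real \<Rightarrow> ('a::banach \<Rightarrow>\<^sub>L 'a)"
    and Q Q\<^sub>s :: "real \<Rightarrow> ('a \<Rightarrow>\<^sub>L 'a)"
  assumes A: "exponential_splitting L M \<gamma> \<rho> Q"
    and B: "exponential_splitting L M\<^sub>s \<gamma>\<^sub>s \<rho>\<^sub>s Q\<^sub>s"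
    and g: "\<gamma> > \<gamma>\<^sub>s"
    and y: "Q\<^sub>s t y = y"
  shows "Q t y = y"
proof -
  note AA = A[unfolded exponential_splitting_def]
  note BB = B[unfolded exponential_splitting_def]
  define z where "z = y - Q t y"
  have "norm z \<le> M * M\<^sub>s * norm y * exp (-(\<gamma> - \<rho>\<^sub>s) * d)" if d: "d \<ge> 0" for d
  proof -
    define r where "r = t - d"
    have rt: "r \<le> t" using d r_def by simp
    define w where "w = back_op L Q\<^sub>s r t y"
    have bij: "bij_betw (blinfun_apply (L t r)) (range (blinfun_apply (Q\<^sub>s r))) (range (blinfun_apply (Q\<^sub>s t)))"
      using BB rt by auto
    have yr: "y \<in> range (blinfun_apply (Q\<^sub>s t))" using y by (metis rangeI)
    have Lw: "L t r w = y" unfolding w_def back_op_def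
      by (rule f_the_inv_into_f_bij_betw[OF bij]) (use yr in auto)
    have wr: "w \<in> range (blinfun_apply (Q\<^sub>s r))" unfolding w_def back_op_def
      using bij yr by (metis bij_betw_def subset_refl the_inv_into_into)
    have nw: "norm w \<le> M\<^sub>s * exp (\<rho>\<^sub>s * d) * norm y"
    proof -
      have "norm (back_op L Q\<^sub>s r t (Q\<^sub>s t y)) \<le> M\<^sub>s * exp (-\<rho>\<^sub>s * (r - t)) * norm y"
        using BB rt by metis
      then show ?thesis using y by (simp add: w_def r_def)
    qed
    have "z = (L t r o\<^sub>L (id_blinfun - Q r)) w"
    proof -
      have "Q t (L t r w) = (Q t o\<^sub>L L t r) w" by simp
      also have "\<dots> = (L t r o\<^sub>L Q r) w" using AA rt by metis
      finally have "Q t y = L t r (Q r w)" using Lw by simp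
      then show ?thesis using Lw by (simp add: z_def blinfun.diff_left blinfun.diff_right)
    qed
    then have "norm z \<le> norm (L t r o\<^sub>L (id_blinfun - Q r)) * norm w"
      using norm_blinfun[of "L t r o\<^sub>L (id_blinfun - Q r)" w] by simp
    also have "\<dots> \<le> M * exp (-\<gamma> * d) * (M\<^sub>s * exp (\<rho>\<^sub>s * d) * norm y)"
    proof -
      have "norm (L t r o\<^sub>L (id_blinfun - Q r)) \<le> M * exp (-\<gamma> * (t - r))" using AA rt by blast
      then have nL: "norm (L t r o\<^sub>L (id_blinfun - Q r)) \<le> M * exp (-\<gamma> * d)" by (simp add: r_def)
      show ?thesis using AA nL nw by (intro mult_mono) auto
    qed
    also have "\<dots> = M * M\<^sub>s * norm y * (exp (-\<gamma> * d) * exp (\<rho>\<^sub>s * d))" by simp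
    also have "exp (-\<gamma> * d) * exp (\<rho>\<^sub>s * d) = exp (-(\<gamma> - \<rho>\<^sub>s) * d)"
      by (simp add: exp_add[symmetric] algebra_simps)
    finally show ?thesis .
  qed
  then have "norm z \<le> 0" using BB g by (intro decay_zero[of "\<gamma> - \<rho>\<^sub>s"]) auto
  then show ?thesis by (simp add: z_def)
qed

theorem lemma3p3:
  fixes L :: "real \<Rightarrow> real \<Rightarrow> ('a::banach \<Rightarrow>\<^sub>L 'a)"
    and Q Q\<^sub>s :: "real \<Rightarrow> ('a \<Rightarrow>\<^sub>L 'a)"
    and M M\<^sub>s \<gamma> \<rho> \<gamma>\<^sub>s \<rho>\<^sub>s :: real
  assumes "evolution_process L"
    and "exponential_splitting L M \<gamma> \<rho> Q"
    and "exponential_splitting L M\<^sub>s \<gamma>\<^sub>s \<rho>\<^sub>s Q\<^sub>s"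
    and "\<gamma> > \<gamma>\<^sub>s"
  shows "\<forall>t. range (blinfun_apply (Q\<^sub>s t)) \<subseteq> range (blinfun_apply (Q t)) \<and>
             {x. Q t x = 0} \<subseteq> {x. Q\<^sub>s t x = 0}"
proof (intro allI conjI subsetI)
  fix t y assume "y \<in> range (blinfun_apply (Q\<^sub>s t))"
  then have "Q\<^sub>s t y = y" using img_iff assms(3) unfolding exponential_splitting_def by blast
  then have "Q t y = y" using img_part[OF assms(2,3,4)] by blast
  then show "y \<in> range (blinfun_apply (Q t))" by (metis rangeI)
next
  fix t x assume "x \<in> {x. Q t x = 0}"
  then show "x \<in> {x. Q\<^sub>s t x = 0}" using ker_part[OF assms(2,3,4)] by blast
qed

end
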